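(* Let $(\mathcal{X},\rho)$ be a metric space, $U\subset\mathcal{X}$, and $r>0$. For any process $\mathbb{X}=(X_n)_{n\ge0}$ in $\mathcal{X}$ and any nearest neighbor process $(\tilde X_n)_{n\ge1}$, the number of $(U,r)$-separated events is bounded by the $r$-packing number of $U$: \[\sum_{n=1}^\infty\mathbb{1}\{E_n^{U,r}\text{ occurs}\}\le\mathcal{P}_r(U).\]
   Context: A nearest neighbor process is any $(\tilde X_n)_{n\ge1}$ with $\tilde X_n\in\arg\min_{x\in\{X_0,\dots,X_{n-1}\}}\rho(X_n,x)$. The $r$-separated event at time $n$ is $E_n^r=\{\rho(X_n,\tilde X_n)\ge r\}$, and the $(U,r)$-separated event is $E_n^{U,r}=E_n^r\cap\{X_n\in U\}$. A set $Z$ is an $r$-packing if $\rho(z,z')\ge r$ for all distinct $z,z'\in Z$; $\mathcal{P}_r(U)$ is the maximum size of an $r$-packing contained in $U$ (possibly $+\infty$). *)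

theory Defs
  imports "HOL-Analysis.Analysis"
begin

definition nn_process :: "(nat \<Rightarrow> 'a::metric_space) \<Rightarrow> (nat \<Rightarrow> 'a) \<Rightarrow> bool" where
  "nn_process X Xt \<longleftrightarrow>
     (\<forall>n\<ge>1. Xt n \<in> X ` {..<n} \<and> (\<forall>x\<in>X ` {..<n}. dist (X n) (Xt n) \<le> dist (X n) x))"

definition sep_event :: "(nat \<Rightarrow> 'a::metric_space) \<Rightarrow> (nat \<Rightarrow> 'a) \<Rightarrow> 'a set \<Rightarrow> real \<Rightarrow> nat \<Rightarrow> bool" where
  "sep_event X Xt U r n \<longleftrightarrow> dist (X n) (Xt n) \<ge> r \<and> X n \<in> U"

definition r_packing :: "real \<Rightarrow> 'a::metric_space set \<Rightarrow> bool" where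
  "r_packing r Z \<longleftrightarrow> (\<forall>z\<in>Z. \<forall>z'\<in>Z. z \<noteq> z' \<longrightarrow> dist z z' \<ge> r)"

definition packing_number :: "real \<Rightarrow> 'a::metric_space set \<Rightarrow> ennreal" where
  "packing_number r U =
     (SUP Z \<in> {Z. Z \<subseteq> U \<and> r_packing r Z}. if finite Z then of_nat (card Z) else \<infinity>)"

end

theory Submission
  imports Defs
begin

theorem lemma4:
  fixes X Xt :: "nat \<Rightarrow> 'a::metric_space" and U :: "'a set" and r :: real
  assumes "r > 0" and "nn_process X Xt"
  shows "(\<Sum>n. (of_bool (sep_event X Xt U r (Suc n)) :: ennreal)) \<le> packing_number r U"
proof (rule suminf_le_const)
  show "summable (\<lambda>n. (of_bool (sep_event X Xt U r (Suc n)) :: ennreal))" by simp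
  fix N :: nat
  define F where "F = {n. n < N \<and> sep_event X Xt U r (Suc n)}"
  have finF: "finite F" unfolding F_def by simp
  have key: "dist (X (Suc n)) (X m) \<ge> r" if "sep_event X Xt U r (Suc n)" "m < Suc n" for n m
  proof -
    have "dist (X (Suc n)) (Xt (Suc n)) \<le> dist (X (Suc n)) (X m)"
      using assms(2) that(2) unfolding nn_process_def by auto
    with that(1) show ?thesis unfolding sep_event_def by linarith
  qed
  have sum_eq: "(\<Sum>n<N. (of_bool (sep_event X Xt U r (Suc n)) :: ennreal)) = of_nat (card F)"
  proof -
    have "(\<Sum>n<N. (of_bool (sep_event X Xt U r (Suc n)) :: ennreal)) = (\<Sum>n\<in>F. 1)"
      unfolding F_def by (simp add: sum.If_cases of_bool_def Int_def conj_commute)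
    then show ?thesis by simp
  qed
  define Z where "Z = (\<lambda>n. X (Suc n)) ` F"
  have dZ: "dist (X (Suc a)) (X (Suc b)) \<ge> r" if "a \<in> F" "b \<in> F" "a \<noteq> b" for a b
  proof (cases "a < b")
    case True
    then have "dist (X (Suc b)) (X (Suc a)) \<ge> r" using key that(2) unfolding F_def by auto
    then show ?thesis by (simp add: dist_commute)
  next
    case False
    then have "b < a" using that(3) by simp
    then show ?thesis using key that(1) unfolding F_def by auto
  qed
  have inj: "inj_on (\<lambda>n. X (Suc n)) F"
  proof (rule inj_onI)
    fix a b assume "a \<in> F" "b \<in> F" "X (Suc a) = X (Suc b)"
    then show "a = b" using dZ[of a b] assms(1) by (cases "a = b") auto
  qed
  have pack: "r_packing r Z" unfolding r_packing_def Z_def using dZ by auto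
  have sub: "Z \<subseteq> U" unfolding Z_def F_def sep_event_def by auto
  have finZ: "finite Z" unfolding Z_def using finF by simp
  have cardZ: "card Z = card F" unfolding Z_def using card_image[OF inj] .
  have "(if finite Z then of_nat (card Z) else \<infinity>) \<le> packing_number r U"
    unfolding packing_number_def by (rule SUP_upper) (use pack sub in auto)
  then show "(\<Sum>n<N. (of_bool (sep_event X Xt U r (Suc n)) :: ennreal)) \<le> packing_number r U"
    using finZ cardZ sum_eq by simp
qed

end
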